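(* Let $L$ be a finite-dimensional pure, nonnilpotent, solvable Lie algebra over $\mathbb{C}$ of breadth $2$ such that $\dim[L,L]=2$ and $\dim L^k=2$ for all integers $k\geq 2$. Then $Z(L)=\{0\}$ and $C_L([L,L])$ is an abelian ideal of $L$.
   Context: For $x\in L$, $b(x)=\mathrm{rank}(\mathrm{ad}_x)$ and the breadth of $L$ is $b(L)=\max\{b(x)\mid x\in L\}$. $L$ is pure if it has no abelian ideal as a direct summand; equivalently $Z(L)\subseteq[L,L]$, where $Z(L)$ is the center. The lower central series is indexed by $L^0=L$, $L^1=[L,L]$, $L^k=[L,L^{k-1}]$ for $k\geq 2$. $C_L(S)$ denotes the centralizer of a subset $S$ in $L$. *)

theory Defs
  imports "HOL-Analysis.Analysis"
begin

text \<open>A finite-dimensional complex Lie algebra is modelled as the space complex^'n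
  (any finite index type 'n) together with a bracket operation br.\<close>

type_synonym 'n lbr = "complex ^ 'n \<Rightarrow> complex ^ 'n \<Rightarrow> complex ^ 'n"

definition lie_algebra :: "'n::finite lbr \<Rightarrow> bool" where
  "lie_algebra br \<longleftrightarrow>
     (\<forall>x. Vector_Spaces.linear (*s) (*s) (br x)) \<and>
     (\<forall>y. Vector_Spaces.linear (*s) (*s) (\<lambda>x. br x y)) \<and>
     (\<forall>x. br x x = 0) \<and>
     (\<forall>x y z. br x (br y z) + br y (br z x) + br z (br x y) = 0)"

text \<open>[A,B] = span of all brackets.\<close>
definition brs :: "'n::finite lbr \<Rightarrow> (complex^'n) set \<Rightarrow> (complex^'n) set \<Rightarrow> (complex^'n) set" where
  "brs br A B = vec.span {br a b | a b. a \<in> A \<and> b \<in> B}"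

text \<open>Lower central series: L^0 = L, L^(k+1) = [L, L^k].\<close>
fun lcs :: "'n::finite lbr \<Rightarrow> nat \<Rightarrow> (complex^'n) set" where
  "lcs br 0 = UNIV"
| "lcs br (Suc k) = brs br UNIV (lcs br k)"

text \<open>Derived series.\<close>
fun dser :: "'n::finite lbr \<Rightarrow> nat \<Rightarrow> (complex^'n) set" where
  "dser br 0 = UNIV"
| "dser br (Suc k) = brs br (dser br k) (dser br k)"

definition nilpotent_lie :: "'n::finite lbr \<Rightarrow> bool" where
  "nilpotent_lie br \<longleftrightarrow> (\<exists>k. lcs br k = {0})"

definition solvable_lie :: "'n::finite lbr \<Rightarrow> bool" where
  "solvable_lie br \<longleftrightarrow> (\<exists>k. dser br k = {0})"

definition lie_center :: "'n::finite lbr \<Rightarrow> (complex^'n) set" where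
  "lie_center br = {z. \<forall>x. br x z = 0}"

definition centralizer :: "'n::finite lbr \<Rightarrow> (complex^'n) set \<Rightarrow> (complex^'n) set" where
  "centralizer br S = {x. \<forall>s\<in>S. br x s = 0}"

definition lie_ideal :: "'n::finite lbr \<Rightarrow> (complex^'n) set \<Rightarrow> bool" where
  "lie_ideal br I \<longleftrightarrow> vec.subspace I \<and> (\<forall>x i. i \<in> I \<longrightarrow> br x i \<in> I)"

definition abelian_set :: "'n::finite lbr \<Rightarrow> (complex^'n) set \<Rightarrow> bool" where
  "abelian_set br A \<longleftrightarrow> (\<forall>a\<in>A. \<forall>b\<in>A. br a b = 0)"

text \<open>b(x) = rank of ad_x; breadth = max b(x).\<close>
definition elem_breadth :: "'n::finite lbr \<Rightarrow> complex^'n \<Rightarrow> nat" where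
  "elem_breadth br x = vec.dim (range (br x))"

definition breadth :: "'n::finite lbr \<Rightarrow> nat" where
  "breadth br = Max (range (elem_breadth br))"

text \<open>Pure: no nonzero abelian ideal is a direct summand (with complementary ideal).\<close>
definition pure_lie :: "'n::finite lbr \<Rightarrow> bool" where
  "pure_lie br \<longleftrightarrow> \<not> (\<exists>I J. lie_ideal br I \<and> lie_ideal br J \<and> I \<noteq> {0} \<and>
      abelian_set br I \<and> I \<inter> J = {0} \<and> {i + j | i j. i \<in> I \<and> j \<in> J} = UNIV)"

end

theory Submission
  imports Defs
begin

context
  fixes br :: "'n::finite lbr"
  assumes LA: "lie_algebra br"
begin

lemma lin1: "Vector_Spaces.linear (*s) (*s) (br x)"
  using LA unfolding lie_algebra_def by blast

lemma lin2: "Vector_Spaces.linear (*s) (*s) (\<lambda>x. br x y)"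
  using LA unfolding lie_algebra_def by blast

lemma add_r: "br x (a + b) = br x a + br x b"
  using vec.linear_add[OF lin1] by blast

lemma scale_r: "br x (c *s a) = c *s br x a"
  using vec.linear_scale[OF lin1] by blast

lemma add_l: "br (a + b) y = br a y + br b y"
  using vec.linear_add[OF lin2[of y], of a b] by simp

lemma scale_l: "br (c *s a) y = c *s br a y"
  using vec.linear_scale[OF lin2[of y], of c a] by simp

lemma zero_r: "br x 0 = 0"
  using vec.linear_0[OF lin1] by blast

lemma zero_l: "br 0 y = 0"
  using vec.linear_0[OF lin2[of y]] by simp

lemma self0: "br x x = 0"
  using LA unfolding lie_algebra_def by blast

lemma jac: "br x (br y z) + br y (br z x) + br z (br x y) = 0"
  using LA unfolding lie_algebra_def by blast

lemma anti: "br x y = - br y x"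
proof -
  have "0 = br (x + y) (x + y)" by (simp add: self0)
  also have "\<dots> = br x x + br x y + (br y x + br y y)" by (simp add: add_l add_r)
  finally have "br x y + br y x = 0" by (simp add: self0)
  then show ?thesis by (simp add: eq_neg_iff_add_eq_0)
qed

lemma neg_r: "br x (- a) = - br x a"
  using scale_r[of x "-1" a] by simp

lemma L1_sub: "vec.subspace (lcs br 1)"
  by (simp add: brs_def)

lemma br_in_L1: "br a b \<in> lcs br 1"
  by (auto simp: brs_def intro: vec.span_base)

lemma center_sub_L1:
  assumes pure: "pure_lie br" and z: "z \<in> lie_center br"
  shows "z \<in> lcs br 1"
proof (rule ccontr)
  assume zn: "z \<notin> lcs br 1"
  have zc: "\<And>x. br x z = 0" using z by (simp add: lie_center_def)
  obtain B where B: "B \<subseteq> lcs br 1" "vec.independent B" "lcs br 1 \<subseteq> vec.span B"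
    "card B = vec.dim (lcs br 1)"
    by (rule vec.basis_exists)
  have spB: "vec.span B \<subseteq> lcs br 1"
    using B(1) L1_sub by (simp add: vec.span_minimal)
  have zB: "z \<notin> vec.span B" using spB zn by blast
  then have zB': "z \<notin> B" using vec.span_base by blast
  have ind: "vec.independent (insert z B)"
    using B(2) zB by (simp add: vec.independent_insert)
  define f where "f = (\<lambda>x::complex^'n. if x = z then z else 0)"
  obtain g where g: "Vector_Spaces.linear (*s) (*s) g" "\<forall>x\<in>insert z B. g x = f x"
    "range g = vec.span (f ` insert z B)"
    using vec.linear_independent_extend_subspace[OF ind, of f] by blast
  have gz: "g z = z" using g(2) by (simp add: f_def)
  have gB: "\<forall>b\<in>B. g b = 0" using g(2) zB' f_def by auto
  have ker_sub: "vec.subspace {x. g x = 0}"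
    unfolding vec.subspace_def using g(1)
    by (auto simp: vec.linear_0 vec.linear_add vec.linear_scale)
  have gL1: "\<forall>x\<in>lcs br 1. g x = 0"
  proof -
    have "vec.span B \<subseteq> {x. g x = 0}"
      using gB ker_sub by (intro vec.span_minimal) auto
    then show ?thesis using B(3) by blast
  qed
  have rg: "range g \<subseteq> vec.span {z}"
  proof -
    have "f ` insert z B \<subseteq> vec.span {z}"
      by (auto simp: f_def intro: vec.span_base vec.span_zero)
    then have "vec.span (f ` insert z B) \<subseteq> vec.span {z}"
      by (simp add: vec.span_minimal)
    then show ?thesis using g(3) by simp
  qed
  have gg: "g (g v) = g v" for v
  proof -
    obtain k where "g v = k *s z" using rg vec.span_singleton by blast
    then show ?thesis using gz vec.linear_scale[OF g(1)] by simp
  qed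
  define I where "I = vec.span {z}"
  define J where "J = {x. g x = 0}"
  have z0: "z \<noteq> 0" using zn vec.subspace_0[OF L1_sub] by blast
  have f1: "lie_ideal br I" unfolding lie_ideal_def I_def
  proof (intro conjI allI impI vec.subspace_span)
    fix x i assume "i \<in> vec.span {z}"
    then obtain k where "i = k *s z" by (auto simp: vec.span_singleton)
    then have "br x i = 0" by (simp add: scale_r zc)
    then show "br x i \<in> vec.span {z}" by (simp add: vec.span_zero)
  qed
  have f2: "lie_ideal br J"
    unfolding lie_ideal_def J_def using ker_sub gL1 br_in_L1 by auto
  have f3: "I \<noteq> {0}" using z0 vec.span_base[of z "{z}"] I_def by auto
  have f4: "abelian_set br I" unfolding abelian_set_def I_def
  proof (intro ballI)
    fix a b assume "b \<in> vec.span {z}"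
    then obtain k where "b = k *s z" by (auto simp: vec.span_singleton)
    then show "br a b = 0" by (simp add: scale_r zc)
  qed
  have f5: "I \<inter> J = {0}"
  proof -
    have "x = 0" if xI: "x \<in> I" and xJ: "x \<in> J" for x
    proof -
      obtain k where k: "x = k *s z" using xI unfolding I_def vec.span_singleton by blast
      have "k *s z = 0" using xJ k gz vec.linear_scale[OF g(1)] J_def by simp
      then show ?thesis using k by simp
    qed
    moreover have "0 \<in> I" "0 \<in> J" using I_def J_def vec.span_zero vec.linear_0[OF g(1)] by auto
    ultimately show ?thesis by blast
  qed
  have f6: "{i + j | i j. i \<in> I \<and> j \<in> J} = UNIV"
  proof -
    have "v \<in> {i + j | i j. i \<in> I \<and> j \<in> J}" for v
    proof -
      have "g v \<in> I" using rg I_def by blast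
      moreover have "v - g v \<in> J" using gg vec.linear_diff[OF g(1)] J_def by simp
      ultimately show ?thesis by force
    qed
    then show ?thesis by blast
  qed
  have "\<exists>I J. lie_ideal br I \<and> lie_ideal br J \<and> I \<noteq> {0} \<and>
      abelian_set br I \<and> I \<inter> J = {0} \<and> {i + j | i j. i \<in> I \<and> j \<in> J} = UNIV"
    using f1 f2 f3 f4 f5 f6 by blast
  then show False using pure unfolding pure_lie_def by blast
qed

lemma L2_eq:
  assumes d1: "vec.dim (lcs br 1) = 2" and d2: "vec.dim (lcs br 2) = 2"
  shows "lcs br 2 = lcs br 1"
proof -
  have L2: "lcs br 2 = brs br UNIV (lcs br 1)" by (simp add: numeral_2_eq_2)
  have sub: "lcs br 2 \<subseteq> lcs br 1"
    unfolding L2 brs_def[of br UNIV "lcs br 1"]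
    by (rule vec.span_minimal) (use br_in_L1 L1_sub in auto)
  have "vec.span (lcs br 2) = vec.span (lcs br 1)"
    using vec.dim_eq_span[OF sub] d1 d2 by simp
  moreover have "vec.subspace (lcs br 2)" unfolding L2 brs_def by simp
  ultimately show ?thesis using L1_sub by (metis vec.span_eq_iff)
qed

lemma center_L1_zero:
  assumes d1: "vec.dim (lcs br 1) = 2" and d2: "vec.dim (lcs br 2) = 2"
    and z: "z \<in> lie_center br" and zL: "z \<in> lcs br 1"
  shows "z = 0"
proof (rule ccontr)
  assume z0: "z \<noteq> 0"
  have zc: "\<And>x. br x z = 0" using z by (simp add: lie_center_def)
  have ind0: "vec.independent {z}" using z0 by (simp add: vec.independent_insert)
  obtain B where B: "{z} \<subseteq> B" "B \<subseteq> lcs br 1" "vec.independent B" "lcs br 1 \<subseteq> vec.span B"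
  proof -
    have zz: "{z} \<subseteq> lcs br 1" using zL by simp
    show ?thesis
      by (rule vec.maximal_independent_subset_extend[OF zz ind0], rule that, assumption+)
  qed
  have "card B = 2" using vec.basis_card_eq_dim[OF B(2) B(4) B(3)] d1 by simp
  then obtain w where Bzw: "B = {z, w}"
    using B(1) by (auto simp: card_2_iff)
  have wL: "w \<in> lcs br 1" using B(2) Bzw by auto
  have dec: "\<exists>k m. u = k *s z + m *s w" if "u \<in> lcs br 1" for u
  proof -
    have "u \<in> vec.span {z, w}" using that B(4) Bzw by blast
    then obtain k where "u - k *s z \<in> vec.span {w}" using vec.span_insert by blast
    then obtain m where "u - k *s z = m *s w" using vec.span_singleton by blast
    then have "u = k *s z + m *s w" by (simp add: algebra_simps)
    then show ?thesis by blast
  qed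
  define R where "R = range (\<lambda>x. br x w)"
  have Rsub: "vec.subspace R"
    unfolding vec.subspace_def R_def
  proof (intro conjI ballI allI)
    show "0 \<in> range (\<lambda>x. br x w)" using zero_l by (metis rangeI)
  next
    fix a b assume "a \<in> range (\<lambda>x. br x w)" "b \<in> range (\<lambda>x. br x w)"
    then obtain x y where "a = br x w" "b = br y w" by blast
    then have "a + b = br (x + y) w" by (simp add: add_l)
    then show "a + b \<in> range (\<lambda>x. br x w)" by blast
  next
    fix c a assume "a \<in> range (\<lambda>x. br x w)"
    then obtain x where "a = br x w" by blast
    then have "c *s a = br (c *s x) w" by (simp add: scale_l)
    then show "c *s a \<in> range (\<lambda>x. br x w)" by blast
  qed
  have brR: "{br a b | a b. a \<in> UNIV \<and> b \<in> lcs br 1} \<subseteq> R"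
  proof
    fix u assume "u \<in> {br a b | a b. a \<in> UNIV \<and> b \<in> lcs br 1}"
    then obtain a b where u: "u = br a b" "b \<in> lcs br 1" by blast
    then obtain k m where "b = k *s z + m *s w" using dec by blast
    then have "u = br (m *s a) w" using u by (simp add: add_r scale_r scale_l zc)
    then show "u \<in> R" unfolding R_def by blast
  qed
  have "lcs br 1 \<subseteq> R"
  proof -
    have "lcs br 1 = lcs br 2" using L2_eq[OF d1 d2] by simp
    also have "\<dots> = vec.span {br a b | a b. a \<in> UNIV \<and> b \<in> lcs br 1}"
      by (simp add: numeral_2_eq_2 brs_def)
    also have "\<dots> \<subseteq> R" using brR Rsub by (simp add: vec.span_minimal)
    finally show ?thesis .
  qed
  then have "w \<in> R" "z \<in> R" using wL zL by auto
  then obtain x y where "w = br x w" and "z = br y w"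
    unfolding R_def by blast
  then have xw: "br x w = w" and yw: "br y w = z" by simp_all
  obtain k m where "br x y = k *s z + m *s w" using dec br_in_L1 by blast
  then have t3: "br w (br x y) = 0" by (simp add: add_r scale_r zc self0)
  have t1: "br x (br y w) = 0" using yw zc by simp
  have t2: "br y (br w x) = - z" using anti[of w x] xw yw by (simp add: neg_r)
  show False using jac[of x y w] t1 t2 t3 z0 by simp
qed

end

theorem proposition3p5:
  fixes br :: "'n::finite lbr"
  assumes "lie_algebra br"
    and "pure_lie br"
    and "\<not> nilpotent_lie br"
    and "solvable_lie br"
    and "breadth br = 2"
    and "vec.dim (lcs br 1) = 2"
    and "\<forall>k\<ge>2. vec.dim (lcs br k) = 2"
  shows "lie_center br = {0} \<and> lie_ideal br (centralizer br (lcs br 1))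
         \<and> abelian_set br (centralizer br (lcs br 1))"
proof -
  note LA = assms(1)
  have d2: "vec.dim (lcs br 2) = 2" using assms(7) by simp
  have Z0: "\<And>z. z \<in> lie_center br \<Longrightarrow> z = 0"
    using center_L1_zero[OF LA assms(6) d2] center_sub_L1[OF LA assms(2)] by blast
  have Z: "lie_center br = {0}"
    using Z0 zero_r[OF LA] by (auto simp: lie_center_def)
  let ?C = "centralizer br (lcs br 1)"
  have sub: "vec.subspace ?C"
    unfolding vec.subspace_def centralizer_def
    by (auto simp: zero_l[OF LA] add_l[OF LA] scale_l[OF LA])
  have ideal: "lie_ideal br ?C"
    unfolding lie_ideal_def
  proof (intro conjI sub allI impI)
    fix x c assume c: "c \<in> ?C"
    show "br x c \<in> ?C" unfolding centralizer_def mem_Collect_eq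
    proof
      fix s assume s: "s \<in> lcs br 1"
      have "br c s = 0" using c s by (simp add: centralizer_def)
      moreover have "br c (br s x) = 0" using c br_in_L1[OF LA] by (simp add: centralizer_def)
      ultimately have "br s (br x c) = 0" using jac[OF LA, of x c s] zero_r[OF LA] by simp
      then show "br (br x c) s = 0" using anti[OF LA, of "br x c" s] by simp
    qed
  qed
  have ab: "abelian_set br ?C"
    unfolding abelian_set_def
  proof (intro ballI)
    fix c y assume c: "c \<in> ?C" and y: "y \<in> ?C"
    have "br x (br c y) = 0" for x
    proof -
      have "br c (br y x) = 0" using c br_in_L1[OF LA] by (simp add: centralizer_def)
      moreover have "br y (br x c) = 0" using y br_in_L1[OF LA] by (simp add: centralizer_def)
      ultimately show ?thesis using jac[OF LA, of x c y] by simp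
    qed
    then have "br c y \<in> lie_center br" by (simp add: lie_center_def)
    then show "br c y = 0" using Z0 by blast
  qed
  show ?thesis using Z ideal ab by blast
qed

end
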